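(* Let $R$ be a commutative Noetherian ring, $M$ a faithful primeful $R$-module having at least one prime submodule, $X=\mathrm{Spec}(M)$, $N$ an $R$-module, $K\le M$, and $U=X\setminus V(K)$. Then the cokernel of $\epsilon_N^U:N\to\mathcal{A}(N,M)(U)$ is $(K:M)$-torsion.
   Context: For a submodule $L$ of an $R$-module $M$, $(L:M)=\{r\in R\mid rM\subseteq L\}$. A submodule $P$ of $M$ is prime if $P\neq M$ and whenever $rm\in P$ ($r\in R$, $m\in M$) then $r\in (P:M)$ or $m\in P$. $\mathrm{Spec}(M)$ is the set of prime submodules. $M$ is faithful if $\mathrm{Ann}_R(M)=0$; primeful if $M=0$ or $\mathrm{Spec}(M)\to\mathrm{Spec}(R/\mathrm{Ann}(M))$, $P\mapsto(P:M)/\mathrm{Ann}(M)$, is surjective. For $L\le M$, $V(L)=\{P\in X\mid (P:M)\supseteq (L:M)\}$; these are the closed sets of the Zariski topology. For open $U\subseteq X$, $\mathrm{Supp}(U)=\{(P:M)\mid P\in U\}$. $\mathcal{A}(N,M)(U)$ is the $R$-module of families $(\gamma_{\mathfrak p})_{\mathfrak p\in\mathrm{Supp}(U)}\in\prod_{\mathfrak p\in\mathrm{Supp}(U)}N_{\mathfrak p}$ such that for each $Q\in U$ there exist an open neighbourhood $W\subseteq U$ of $Q$ and $s\in R$, $m\in N$ with $s\notin(P:M)$ and $\gamma_{(P:M)}=m/s$ for every $P\in W$. $\epsilon_N^U(n)=(n/1)_{\mathfrak p\in\mathrm{Supp}(U)}$. A module $H$ is $I$-torsion if every element is annihilated by some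 power of $I$. *)

theory Defs
  imports Main "HOL.Modules"
begin

definition ring_ideal :: "'r::comm_ring_1 set \<Rightarrow> bool" where
  "ring_ideal I \<longleftrightarrow> 0 \<in> I \<and> (\<forall>a\<in>I. \<forall>b\<in>I. a + b \<in> I) \<and> (\<forall>r. \<forall>a\<in>I. r * a \<in> I)"

definition prime_ring_ideal :: "'r::comm_ring_1 set \<Rightarrow> bool" where
  "prime_ring_ideal p \<longleftrightarrow> ring_ideal p \<and> p \<noteq> UNIV \<and> (\<forall>a b. a * b \<in> p \<longrightarrow> a \<in> p \<or> b \<in> p)"

definition noetherian_ring :: "'r::comm_ring_1 itself \<Rightarrow> bool" where
  "noetherian_ring _ \<longleftrightarrow>
     (\<forall>f :: nat \<Rightarrow> 'r set. (\<forall>n. ring_ideal (f n)) \<and> (\<forall>n. f n \<subseteq> f (Suc n))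
        \<longrightarrow> (\<exists>N. \<forall>n\<ge>N. f n = f N))"

definition ideal_gen :: "'r::comm_ring_1 set \<Rightarrow> 'r set" where
  "ideal_gen S = \<Inter>{J. ring_ideal J \<and> S \<subseteq> J}"

definition ideal_pow :: "'r::comm_ring_1 set \<Rightarrow> nat \<Rightarrow> 'r set" where
  "ideal_pow I n = ideal_gen {(\<Prod>i<n. f i) | f. \<forall>i<n. f i \<in> I}"

definition colon :: "('r::comm_ring_1 \<Rightarrow> 'm::ab_group_add \<Rightarrow> 'm) \<Rightarrow> 'm set \<Rightarrow> 'r set" where
  "colon sc L = {r. \<forall>m. sc r m \<in> L}"

definition ann :: "('r::comm_ring_1 \<Rightarrow> 'm::ab_group_add \<Rightarrow> 'm) \<Rightarrow> 'r set" where
  "ann sc = {r. \<forall>m. sc r m = 0}"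

definition faithful_mod :: "('r::comm_ring_1 \<Rightarrow> 'm::ab_group_add \<Rightarrow> 'm) \<Rightarrow> bool" where
  "faithful_mod sc \<longleftrightarrow> ann sc = {0}"

definition prime_submodule :: "('r::comm_ring_1 \<Rightarrow> 'm::ab_group_add \<Rightarrow> 'm) \<Rightarrow> 'm set \<Rightarrow> bool" where
  "prime_submodule sc P \<longleftrightarrow> module.subspace sc P \<and> P \<noteq> UNIV \<and>
     (\<forall>r m. sc r m \<in> P \<longrightarrow> r \<in> colon sc P \<or> m \<in> P)"

definition Spec_mod :: "('r::comm_ring_1 \<Rightarrow> 'm::ab_group_add \<Rightarrow> 'm) \<Rightarrow> 'm set set" where
  "Spec_mod sc = {P. prime_submodule sc P}"

text \<open>Primeful: M = 0, or the map P \<mapsto> (P:M)/Ann(M) from Spec(M) to Spec(R/Ann(M)) is surjective.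
  Primes of R/Ann(M) are identified with the prime ideals of R containing Ann(M).\<close>
definition primeful :: "('r::comm_ring_1 \<Rightarrow> 'm::ab_group_add \<Rightarrow> 'm) \<Rightarrow> bool" where
  "primeful sc \<longleftrightarrow> (UNIV :: 'm set) = {0} \<or>
     (\<forall>p. prime_ring_ideal p \<and> ann sc \<subseteq> p \<longrightarrow> (\<exists>P\<in>Spec_mod sc. colon sc P = p))"

definition Vset :: "('r::comm_ring_1 \<Rightarrow> 'm::ab_group_add \<Rightarrow> 'm) \<Rightarrow> 'm set \<Rightarrow> 'm set set" where
  "Vset sc L = {P\<in>Spec_mod sc. colon sc L \<subseteq> colon sc P}"

definition zariski_open :: "('r::comm_ring_1 \<Rightarrow> 'm::ab_group_add \<Rightarrow> 'm) \<Rightarrow> 'm set set \<Rightarrow> bool" where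
  "zariski_open sc W \<longleftrightarrow> (\<exists>L. module.subspace sc L \<and> W = Spec_mod sc - Vset sc L)"

definition Supp_open :: "('r::comm_ring_1 \<Rightarrow> 'm::ab_group_add \<Rightarrow> 'm) \<Rightarrow> 'm set set \<Rightarrow> 'r set set" where
  "Supp_open sc U = colon sc ` U"

section \<open>Localization N_p: the fraction m/s is the equivalence class of (m,s)\<close>

definition loc_frac :: "('r::comm_ring_1 \<Rightarrow> 'n::ab_group_add \<Rightarrow> 'n) \<Rightarrow> 'r set \<Rightarrow> 'n \<Rightarrow> 'r \<Rightarrow> ('n \<times> 'r) set" where
  "loc_frac sc p m s = {(m', s'). s' \<notin> p \<and> (\<exists>u. u \<notin> p \<and> sc u (sc s' m - sc s m') = 0)}"

definition loc_smul :: "('r::comm_ring_1 \<Rightarrow> 'n::ab_group_add \<Rightarrow> 'n) \<Rightarrow> 'r set \<Rightarrow> 'r \<Rightarrow> ('n \<times> 'r) set \<Rightarrow> ('n \<times> 'r) set" where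
  "loc_smul sc p r c = (let (m, s) = (SOME x. x \<in> c) in loc_frac sc p (sc r m) s)"

definition A_sections ::
  "('r::comm_ring_1 \<Rightarrow> 'n::ab_group_add \<Rightarrow> 'n) \<Rightarrow> ('r \<Rightarrow> 'm::ab_group_add \<Rightarrow> 'm) \<Rightarrow> 'm set set
     \<Rightarrow> ('r set \<Rightarrow> ('n \<times> 'r) set) set" where
  "A_sections scN scM U = {\<gamma>.
     (\<forall>p. p \<notin> Supp_open scM U \<longrightarrow> \<gamma> p = {}) \<and>
     (\<forall>Q\<in>U. \<exists>W. zariski_open scM W \<and> Q \<in> W \<and> W \<subseteq> U \<and>
        (\<exists>s m. \<forall>P\<in>W. s \<notin> colon scM P \<and> \<gamma> (colon scM P) = loc_frac scN (colon scM P) m s))}"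

definition eps_map ::
  "('r::comm_ring_1 \<Rightarrow> 'n::ab_group_add \<Rightarrow> 'n) \<Rightarrow> ('r \<Rightarrow> 'm::ab_group_add \<Rightarrow> 'm) \<Rightarrow> 'm set set
     \<Rightarrow> 'n \<Rightarrow> ('r set \<Rightarrow> ('n \<times> 'r) set)" where
  "eps_map scN scM U n = (\<lambda>p. if p \<in> Supp_open scM U then loc_frac scN p n 1 else {})"

definition sect_smul ::
  "('r::comm_ring_1 \<Rightarrow> 'n::ab_group_add \<Rightarrow> 'n) \<Rightarrow> ('r \<Rightarrow> 'm::ab_group_add \<Rightarrow> 'm) \<Rightarrow> 'm set set
     \<Rightarrow> 'r \<Rightarrow> ('r set \<Rightarrow> ('n \<times> 'r) set) \<Rightarrow> ('r set \<Rightarrow> ('n \<times> 'r) set)" where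
  "sect_smul scN scM U r \<gamma> = (\<lambda>p. if p \<in> Supp_open scM U then loc_smul scN p r (\<gamma> p) else {})"

text \<open>Coker(epsilon_N^U) = A(N,M)(U) / Im(epsilon_N^U) is I-torsion: every class \<gamma> + Im is
  annihilated by some power I^k, i.e. I^k \<gamma> \<subseteq> Im(epsilon).\<close>
definition coker_eps_torsion ::
  "('r::comm_ring_1 \<Rightarrow> 'n::ab_group_add \<Rightarrow> 'n) \<Rightarrow> ('r \<Rightarrow> 'm::ab_group_add \<Rightarrow> 'm) \<Rightarrow> 'm set set
     \<Rightarrow> 'r set \<Rightarrow> bool" where
  "coker_eps_torsion scN scM U I \<longleftrightarrow>
     (\<forall>\<gamma>\<in>A_sections scN scM U. \<exists>k. \<forall>r\<in>ideal_pow I k.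
        sect_smul scN scM U r \<gamma> \<in> range (eps_map scN scM U))"

end

theory Submission
  imports Defs
begin

interpretation rmod: module "(*) :: 'a::comm_ring_1 \<Rightarrow> 'a \<Rightarrow> 'a"
  by standard (auto simp: algebra_simps)

declare rmod.scale_scale[simp del]

lemma ring_ideal_iff: "ring_ideal I \<longleftrightarrow> rmod.subspace I"
  unfolding ring_ideal_def rmod.subspace_def by auto

lemma ideal_gen_span: "ideal_gen S = rmod.span S"
  unfolding ideal_gen_def rmod.span_def hull_def ring_ideal_iff by auto

lemma ideal_mult: "ring_ideal J \<Longrightarrow> a \<in> J \<Longrightarrow> b * a \<in> J"
  unfolding ring_ideal_def by auto
lemma ideal_mult2: "ring_ideal J \<Longrightarrow> a \<in> J \<Longrightarrow> a * b \<in> J"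
  unfolding ring_ideal_def by (metis mult.commute)
lemma ideal_add: "ring_ideal J \<Longrightarrow> a \<in> J \<Longrightarrow> b \<in> J \<Longrightarrow> a + b \<in> J"
  unfolding ring_ideal_def by auto
lemma ideal_0: "ring_ideal J \<Longrightarrow> 0 \<in> J"
  unfolding ring_ideal_def by auto
lemma ideal_sum: "ring_ideal J \<Longrightarrow> (\<And>x. x \<in> B \<Longrightarrow> f x \<in> J) \<Longrightarrow> sum f B \<in> J"
  unfolding ring_ideal_iff by (rule rmod.subspace_sum)
lemma ideal_pow_mono: "ring_ideal J \<Longrightarrow> (a::'a::comm_ring_1)^m \<in> J \<Longrightarrow> m \<le> k \<Longrightarrow> a^k \<in> J"
proof -
  assume "ring_ideal J" "a^m \<in> J" "m \<le> k"
  then have "a^(k-m) * a^m \<in> J" by (simp add: ideal_mult)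
  moreover have "a^(k-m) * a^m = a^k" using \<open>m \<le> k\<close> by (simp add: power_add[symmetric])
  ultimately show ?thesis by simp
qed

definition rad :: "'a::comm_ring_1 set \<Rightarrow> 'a set" where "rad J = {x. \<exists>n. x^n \<in> J}"

lemma rad_ideal: assumes J: "ring_ideal J" shows "ring_ideal (rad J)"
  unfolding ring_ideal_def
proof (intro conjI ballI allI)
  show "0 \<in> rad J" unfolding rad_def using J by (auto intro!: exI[of _ 1] simp: ideal_0)
next
  fix a b assume "a \<in> rad J" "b \<in> rad J"
  then obtain m n where m: "a^m \<in> J" and n: "b^n \<in> J" unfolding rad_def by auto
  have "(a+b)^(m+n) = (\<Sum>k\<le>m+n. of_nat ((m+n) choose k) * a ^ k * b ^ (m+n - k))"
    by (rule binomial_ring)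
  also have "\<dots> \<in> J"
  proof (rule ideal_sum[OF J])
    fix k assume "k \<in> {..m+n}"
    show "of_nat ((m+n) choose k) * a ^ k * b ^ (m+n - k) \<in> J"
    proof (cases "m \<le> k")
      case True
      then have "a^k \<in> J" using ideal_pow_mono[OF J m, of k] by simp
      then have "a ^ k * b ^ (m+n - k) \<in> J" by (rule ideal_mult2[OF J])
      then have "of_nat ((m+n) choose k) * (a ^ k * b ^ (m+n - k)) \<in> J"
        by (rule ideal_mult[OF J])
      then show ?thesis by (simp only: mult.assoc)
    next
      case False
      then have "b^(m+n-k) \<in> J" using ideal_pow_mono[OF J n, of "m+n-k"] by simp
      then show ?thesis by (rule ideal_mult[OF J])
    qed
  qed
  finally show "a + b \<in> rad J" unfolding rad_def by auto
next
  fix r a assume "a \<in> rad J"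
  then obtain m where m: "a^m \<in> J" unfolding rad_def by auto
  have "(r*a)^m = r^m * a^m" by (simp add: power_mult_distrib)
  moreover have "r^m * a^m \<in> J" using ideal_mult[OF J m, of "r^m"] .
  ultimately have "(r*a)^m \<in> J" by simp
  then show "r * a \<in> rad J" unfolding rad_def by blast
qed

lemma rad_sup: "J \<subseteq> rad J" unfolding rad_def by (auto intro!: exI[of _ 1])

lemma rad_rad: "rad (rad J) = rad J"
proof
  show "rad (rad J) \<subseteq> rad J"
  proof
    fix x assume "x \<in> rad (rad J)"
    then obtain n m where "(x^n)^m \<in> J" unfolding rad_def by blast
    then have "x^(n*m) \<in> J" by (simp add: power_mult)
    then show "x \<in> rad J" unfolding rad_def by blast
  qed
qed (rule rad_sup)

lemma span_rad: assumes "ring_ideal J" "S \<subseteq> rad J" shows "rmod.span S \<subseteq> rad J"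
proof -
  have "rmod.subspace (rad J)" using rad_ideal[OF assms(1)] ring_ideal_iff by blast
  then show ?thesis by (rule rmod.span_minimal[OF assms(2)])
qed

lemma memX: "x \<in> M \<Longrightarrow> u = x + c*a \<Longrightarrow> u \<in> {x + c*a | x c. x \<in> M}"
  by (simp only: mem_Collect_eq) (rule exI[of _ x], rule exI[of _ c], simp)

lemma memX_E: "u \<in> {x + c*a | x c. x \<in> M} \<Longrightarrow> (\<And>x c. u = x + c*a \<Longrightarrow> x \<in> M \<Longrightarrow> P) \<Longrightarrow> P"
  by blast

lemma exists_prime:
  fixes A :: "'a::comm_ring_1 set"
  assumes A: "ring_ideal A" and f: "\<forall>n. f^n \<notin> A"
  shows "\<exists>q. prime_ring_ideal q \<and> A \<subseteq> q \<and> f \<notin> q"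
proof -
  define \<A> where "\<A> = {B. ring_ideal B \<and> A \<subseteq> B \<and> (\<forall>n. f^n \<notin> B)}"
  have "\<exists>M\<in>\<A>. \<forall>X\<in>\<A>. M \<subseteq> X \<longrightarrow> X = M"
  proof (rule subset_Zorn_nonempty)
    show "\<A> \<noteq> {}" using A f unfolding \<A>_def by auto
  next
    fix C assume C: "C \<noteq> {}" "subset.chain \<A> C"
    then have CA: "C \<subseteq> \<A>" and ch: "\<forall>X\<in>C. \<forall>Y\<in>C. X \<subseteq> Y \<or> Y \<subseteq> X"
      unfolding subset.chain_def by auto
    have "ring_ideal (\<Union>C)" unfolding ring_ideal_def
    proof (intro conjI ballI allI)
      obtain B where "B \<in> C" using C by auto
      then have "0 \<in> B" using CA unfolding \<A>_def by (auto simp: ring_ideal_def)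
      then show "0 \<in> \<Union>C" using \<open>B \<in> C\<close> by blast
    next
      fix a b assume "a \<in> \<Union>C" "b \<in> \<Union>C"
      then obtain X Y where X: "X \<in> C" "a \<in> X" and Y: "Y \<in> C" "b \<in> Y" by auto
      from ch X Y have "X \<subseteq> Y \<or> Y \<subseteq> X" by auto
      then show "a + b \<in> \<Union>C"
      proof
        assume "X \<subseteq> Y"
        then have "a + b \<in> Y" using Y X CA ideal_add[of Y a b] unfolding \<A>_def by auto
        then show ?thesis using Y by blast
      next
        assume "Y \<subseteq> X"
        then have "a + b \<in> X" using Y X CA ideal_add[of X a b] unfolding \<A>_def by auto
        then show ?thesis using X by blast
      qed
    next
      fix r a assume "a \<in> \<Union>C"
      then obtain X where X: "X \<in> C" "a \<in> X" by auto
      then have "r * a \<in> X" using CA ideal_mult[of X a r] unfolding \<A>_def by auto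
      then show "r * a \<in> \<Union>C" using X by blast
    qed
    moreover have "A \<subseteq> \<Union>C" using C CA unfolding \<A>_def by auto
    moreover have "\<forall>n. f^n \<notin> \<Union>C" using CA unfolding \<A>_def by auto
    ultimately show "\<Union>C \<in> \<A>" unfolding \<A>_def by auto
  qed
  then obtain M where MA: "M \<in> \<A>" and Mmax: "\<forall>X\<in>\<A>. M \<subseteq> X \<longrightarrow> X = M" by auto
  have M: "ring_ideal M" "A \<subseteq> M" "\<forall>n. f^n \<notin> M" using MA unfolding \<A>_def by auto
  have ext: "\<exists>n. f^n \<in> {x + c * a | x c. x \<in> M}" if a: "a \<notin> M" for a
  proof (rule ccontr)
    assume nn: "\<not> ?thesis"
    let ?X = "{x + c * a | x c. x \<in> M}"
    have "ring_ideal ?X" unfolding ring_ideal_def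
    proof (intro conjI ballI allI)
      have "0 = 0 + 0 * a" "(0::'a) \<in> M" using M(1) by (auto simp: ideal_0)
      then show "0 \<in> ?X" by (intro memX)
    next
      fix u v assume "u \<in> ?X" "v \<in> ?X"
      then obtain x c y d where xy: "u = x + c*a" "v = y + d*a" "x \<in> M" "y \<in> M" by blast
      have "u + v = (x+y) + (c+d)*a" unfolding xy(1,2) by (simp add: algebra_simps)
      moreover have "x + y \<in> M" using ideal_add[OF M(1) xy(3,4)] .
      ultimately
      show "u + v \<in> ?X" by (intro memX)
    next
      fix r u assume "u \<in> ?X"
      then obtain x c where xc: "u = x + c*a" "x \<in> M" by (rule memX_E)
      have "r * u = (r*x) + (r*c)*a" unfolding xc(1) by (simp only: xc(1) distrib_left mult.assoc)
      moreover have "r * x \<in> M" using ideal_mult[OF M(1) xc(2), of r] .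
      ultimately show "r * u \<in> ?X" by (intro memX)
    qed
    moreover have "M \<subseteq> ?X"
    proof
      fix x assume "x \<in> M" moreover have "x = x + 0 * a" by simp
      ultimately show "x \<in> ?X" by (intro memX)
    qed
    moreover have "a \<in> ?X"
    proof -
      have "a = 0 + 1 * a" "(0::'a) \<in> M" using M(1) by (auto simp: ideal_0)
      then show ?thesis by (intro memX)
    qed
    ultimately have "?X \<in> \<A>" using nn M unfolding \<A>_def by auto
    then have "?X = M" using Mmax \<open>M \<subseteq> ?X\<close> by auto
    then show False using \<open>a \<in> ?X\<close> a by auto
  qed
  have "prime_ring_ideal M" unfolding prime_ring_ideal_def
  proof (intro conjI allI impI)
    show "ring_ideal M" by (rule M(1))
    show "M \<noteq> UNIV" using M(3)[rule_format, of 0] by auto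
  next
    fix a b assume ab: "a * b \<in> M"
    show "a \<in> M \<or> b \<in> M"
    proof (rule ccontr)
      assume "\<not> (a \<in> M \<or> b \<in> M)"
      then obtain n m where "f^n \<in> {x + c * a | x c. x \<in> M}" "f^m \<in> {x + c * b | x c. x \<in> M}"
        using ext[of a] ext[of b] by blast
      then obtain x c y d where xy: "f^n = x + c*a" "f^m = y + d*b" "x \<in> M" "y \<in> M" by auto
      have "f^(n+m) = x*y + x*(d*b) + y*(c*a) + (c*d)*(a*b)"
        by (simp add: power_add xy algebra_simps)
      also have "\<dots> \<in> M"
      proof -
        have "x*y \<in> M" "x*(d*b) \<in> M" "y*(c*a) \<in> M" "(c*d)*(a*b) \<in> M"
          using ideal_mult2[OF M(1) xy(3)] ideal_mult2[OF M(1) xy(4)] ideal_mult[OF M(1) ab] by auto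
        then show ?thesis using M(1) by (simp add: ideal_add)
      qed
      finally show False using M(3) by auto
    qed
  qed
  moreover have "f \<notin> M" using M(3)[rule_format, of 1] by simp
  ultimately show ?thesis using M by auto
qed

lemma noeth_fg:
  fixes I :: "'a::comm_ring_1 set"
  assumes N: "noetherian_ring TYPE('a)" and I: "ring_ideal I"
  shows "\<exists>F. finite F \<and> F \<subseteq> I \<and> I = rmod.span F"
proof -
  define step :: "'a list \<Rightarrow> 'a list" where
    "step l = (if I \<subseteq> rmod.span (set l) then l else (SOME x. x \<in> I \<and> x \<notin> rmod.span (set l)) # l)" for l
  define L where "L n = (step ^^ n) []" for n
  define g where "g n = rmod.span (set (L n))" for n
  have LS: "L (Suc n) = step (L n)" for n unfolding L_def by simp
  have LI: "set (L n) \<subseteq> I" for n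
  proof (induction n)
    case 0 then show ?case unfolding L_def by simp
  next
    case (Suc n)
    show ?case
    proof (cases "I \<subseteq> rmod.span (set (L n))")
      case True then show ?thesis using Suc unfolding LS step_def by simp
    next
      case False
      then have "\<exists>x. x \<in> I \<and> x \<notin> rmod.span (set (L n))" by blast
      then have "(SOME x. x \<in> I \<and> x \<notin> rmod.span (set (L n))) \<in> I" by (rule someI2_ex) blast
      then show ?thesis using Suc False unfolding LS step_def by simp
    qed
  qed
  have "\<exists>N. \<forall>n\<ge>N. g n = g N"
  proof -
    have "(\<forall>n. ring_ideal (g n)) \<and> (\<forall>n. g n \<subseteq> g (Suc n))"
    proof (intro conjI allI)
      fix n show "ring_ideal (g n)" unfolding g_def ring_ideal_iff by simp
      show "g n \<subseteq> g (Suc n)" unfolding g_def LS step_def by (rule rmod.span_mono) auto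
    qed
    then show ?thesis using N unfolding noetherian_ring_def by blast
  qed
  then obtain N where "\<forall>n\<ge>N. g n = g N" by blast
  then have gN: "g (Suc N) = g N" using le_SucI[OF order_refl[of N]] by blast
  have "I \<subseteq> g N"
  proof (rule ccontr)
    assume nI: "\<not> I \<subseteq> g N"
    then have "\<exists>x. x \<in> I \<and> x \<notin> rmod.span (set (L N))" unfolding g_def by blast
    then have sx: "(SOME x. x \<in> I \<and> x \<notin> rmod.span (set (L N))) \<notin> g N"
      unfolding g_def by (rule someI2_ex) blast
    have "L (Suc N) = (SOME x. x \<in> I \<and> x \<notin> rmod.span (set (L N))) # L N"
      using nI unfolding LS step_def g_def by simp
    then have "(SOME x. x \<in> I \<and> x \<notin> rmod.span (set (L N))) \<in> g (Suc N)"
      unfolding g_def by (simp add: rmod.span_base)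
    then show False using sx gN by simp
  qed
  moreover have "g N \<subseteq> I" unfolding g_def
    using rmod.span_minimal[OF LI[of N]] I ring_ideal_iff by blast
  ultimately show ?thesis using LI[of N] unfolding g_def by (intro exI[of _ "set (L N)"]) auto
qed

definition PP :: "'a::comm_ring_1 set \<Rightarrow> 'a set \<Rightarrow> nat \<Rightarrow> bool" where
  "PP J A k \<longleftrightarrow> (\<forall>(S::nat set) x. finite S \<longrightarrow> k \<le> card S \<longrightarrow> (\<forall>i\<in>S. x i \<in> A) \<longrightarrow> prod x S \<in> J)"

lemma prod_zero_mem: "finite S \<Longrightarrow> i \<in> S \<Longrightarrow> x i = (0::'a::comm_ring_1) \<Longrightarrow> prod x S = 0"
  by (simp add: prod.remove)

lemma GEN:
  fixes F :: "'a::comm_ring_1 set"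
  assumes J: "ring_ideal J" and F: "finite F" and FJ: "F \<subseteq> rad J"
  shows "\<exists>k. PP J (rmod.span F) k"
  using F FJ
proof (induction F rule: finite_induct)
  case empty
  show ?case unfolding PP_def
  proof (intro exI[of _ 1] allI impI)
    fix S :: "nat set" and x :: "nat \<Rightarrow> 'a" assume "finite S" "1 \<le> card S" "\<forall>i\<in>S. x i \<in> rmod.span {}"
    then obtain i where "i \<in> S" by (metis card.empty card_ge_0_finite not_one_le_zero ex_in_conv)
    then have "prod x S = 0" using \<open>finite S\<close> \<open>\<forall>i\<in>S. x i \<in> rmod.span {}\<close>
      by (intro prod_zero_mem) auto
    then show "prod x S \<in> J" using ideal_0[OF J] by simp
  qed
next
  case (insert a F)
  then obtain k where k: "PP J (rmod.span F) k" by auto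
  from insert obtain e where e: "a^e \<in> J" unfolding rad_def by auto
  show ?case unfolding PP_def
  proof (intro exI[of _ "k+e"] allI impI)
    fix S :: "nat set" and x :: "nat \<Rightarrow> 'a" assume S: "finite S" "k + e \<le> card S" and xS: "\<forall>i\<in>S. x i \<in> rmod.span (insert a F)"
    define c where "c i = (SOME c. x i - c * a \<in> rmod.span F)" for i
    define y where "y i = x i - c i * a" for i
    have yF: "y i \<in> rmod.span F" if "i \<in> S" for i
    proof -
      have "\<exists>c. x i - c * a \<in> rmod.span F" using xS that rmod.span_breakdown_eq by blast
      then show ?thesis unfolding y_def c_def by (rule someI_ex)
    qed
    have "prod x S = (\<Prod>i\<in>S. c i * a + y i)" unfolding y_def by simp
    also have "\<dots> = (\<Sum>T\<in>Pow S. (\<Prod>i\<in>T. c i * a) * (\<Prod>i\<in>S-T. y i))"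
      by (rule prod_add[OF S(1)])
    also have "\<dots> \<in> J"
    proof (rule ideal_sum[OF J])
      fix T assume T: "T \<in> Pow S"
      then have fT: "finite T" "T \<subseteq> S" using S(1) finite_subset by auto
      show "(\<Prod>i\<in>T. c i * a) * (\<Prod>i\<in>S-T. y i) \<in> J"
      proof (cases "e \<le> card T")
        case True
        have "(\<Prod>i\<in>T. c i * a) = (\<Prod>i\<in>T. c i) * a ^ card T"
          by (simp add: prod.distrib)
        moreover have "a ^ card T \<in> J" using ideal_pow_mono[OF J e True] .
        ultimately have "(\<Prod>i\<in>T. c i * a) \<in> J" using ideal_mult[OF J] by simp
        then show ?thesis by (rule ideal_mult2[OF J])
      next
        case False
        have "card (S - T) = card S - card T" using fT by (simp add: card_Diff_subset)
        then have "k \<le> card (S - T)" using False S(2) by linarith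
        then have "(\<Prod>i\<in>S-T. y i) \<in> J" using k S(1) yF unfolding PP_def by auto
        then show ?thesis by (rule ideal_mult[OF J])
      qed
    qed
    finally show "prod x S \<in> J" .
  qed
qed

lemma ideal_pow_sub:
  fixes F :: "'a::comm_ring_1 set"
  assumes J: "ring_ideal J" and F: "finite F" and FJ: "F \<subseteq> rad J"
  shows "\<exists>k. ideal_pow (rmod.span F) k \<subseteq> J"
proof -
  obtain k where k: "PP J (rmod.span F) k" using GEN[OF assms] by auto
  have "{(\<Prod>i<k. f i) | f. \<forall>i<k. f i \<in> rmod.span F} \<subseteq> J"
  proof
    fix z assume "z \<in> {(\<Prod>i<k. f i) | f. \<forall>i<k. f i \<in> rmod.span F}"
    then obtain f where "z = (\<Prod>i<k. f i)" "\<forall>i<k. f i \<in> rmod.span F" by blast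
    then show "z \<in> J" using k unfolding PP_def by auto
  qed
  then have "ideal_pow (rmod.span F) k \<subseteq> J"
    unfolding ideal_pow_def ideal_gen_span using J ring_ideal_iff rmod.span_minimal by blast
  then show ?thesis by blast
qed

lemma prime_mult_notin: "prime_ring_ideal p \<Longrightarrow> x \<notin> p \<Longrightarrow> y \<notin> p \<Longrightarrow> x * y \<notin> p"
  unfolding prime_ring_ideal_def by blast

lemma prime_one_notin: "prime_ring_ideal p \<Longrightarrow> 1 \<notin> p"
  unfolding prime_ring_ideal_def ring_ideal_def by (metis UNIV_eq_I mult.right_neutral)

lemma prime_pow_notin: "prime_ring_ideal p \<Longrightarrow> x \<notin> p \<Longrightarrow> x ^ n \<notin> p"
  by (induction n) (auto simp: prime_one_notin prime_mult_notin)

lemma prime_ideal: "prime_ring_ideal p \<Longrightarrow> ring_ideal p"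
  unfolding prime_ring_ideal_def by blast

lemma prime_rad: assumes "prime_ring_ideal p" "J \<subseteq> p" shows "rad J \<subseteq> p"
proof
  fix x assume "x \<in> rad J"
  then obtain n where "x^n \<in> J" unfolding rad_def by blast
  then show "x \<in> p" using assms prime_pow_notin by blast
qed

lemma rad_mono: "A \<subseteq> B \<Longrightarrow> rad A \<subseteq> rad B" unfolding rad_def by blast

context module
begin

lemma eqd: "c *s (x - y) = 0 \<longleftrightarrow> c *s x = c *s y"
  by (simp add: scale_right_diff_distrib)

lemma loc_refl: "s \<notin> p \<Longrightarrow> (m, s) \<in> loc_frac scale p m s"
  unfolding loc_frac_def by (auto intro!: exI[of _ s])

lemma loc_mem: "(a, t) \<in> loc_frac scale p m s \<Longrightarrow> t \<notin> p \<and> (\<exists>u. u \<notin> p \<and> u *s (t *s m - s *s a) = 0)"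
  unfolding loc_frac_def by auto

lemma loc_sub:
  assumes p: "prime_ring_ideal p" and s: "s \<notin> p" and w: "w \<notin> p" and e: "w *s (t *s a - s *s b) = 0"
  shows "loc_frac scale p a s \<subseteq> loc_frac scale p b t"
proof
  fix z assume "z \<in> loc_frac scale p a s"
  then obtain a' s' where z: "z = (a', s')" and zz: "(a', s') \<in> loc_frac scale p a s" by (cases z) auto
  from loc_mem[OF zz] obtain u where s': "s' \<notin> p" and u: "u \<notin> p" "u *s (s' *s a - s *s a') = 0" by blast
  have e1: "(w * t) *s a = (w * s) *s b" using e unfolding eqd by simp
  have u1: "(u * s') *s a = (u * s) *s a'" using u(2) unfolding eqd by simp
  have "(w * u * s) *s (s' *s b) = (u * s') *s ((w * s) *s b)" by (simp add: ac_simps)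
  also have "\<dots> = (u * s') *s ((w * t) *s a)" by (simp only: e1)
  also have "\<dots> = (w * t) *s ((u * s') *s a)" by (simp add: ac_simps)
  also have "\<dots> = (w * t) *s ((u * s) *s a')" by (simp only: u1)
  also have "\<dots> = (w * u * s) *s (t *s a')" by (simp add: ac_simps)
  finally have "(w * u * s) *s (s' *s b - t *s a') = 0" unfolding eqd .
  moreover have "w * u * s \<notin> p" using p s w u(1) by (intro prime_mult_notin)
  ultimately show "z \<in> loc_frac scale p b t" unfolding z loc_frac_def using s' by blast
qed

lemma loc_eq:
  assumes p: "prime_ring_ideal p" and s: "s \<notin> p" and t: "t \<notin> p" and w: "w \<notin> p"
    and e: "w *s (t *s a - s *s b) = 0"
  shows "loc_frac scale p a s = loc_frac scale p b t"
proof
  show "loc_frac scale p a s \<subseteq> loc_frac scale p b t" by (rule loc_sub[OF p s w e])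
  have "w *s (s *s b - t *s a) = 0" using e unfolding eqd by simp
  then show "loc_frac scale p b t \<subseteq> loc_frac scale p a s" by (rule loc_sub[OF p t w])
qed

lemma colon_ideal: assumes "subspace L" shows "ring_ideal (colon scale L)"
  unfolding ring_ideal_def colon_def
proof (intro conjI ballI allI; clarsimp)
  show "\<And>m. 0 \<in> L" using subspace_0[OF assms] .
  show "\<And>a b m. \<forall>m. a *s m \<in> L \<Longrightarrow> \<forall>m. b *s m \<in> L \<Longrightarrow> (a + b) *s m \<in> L"
    using assms by (simp add: scale_left_distrib subspace_add)
  show "\<And>r a m. \<forall>m. a *s m \<in> L \<Longrightarrow> (r * a) *s m \<in> L"
    using assms by (metis scale_scale subspace_scale)
qed

lemma colon_prime: assumes "prime_submodule scale P" shows "prime_ring_ideal (colon scale P)"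
proof -
  have sP: "subspace P" and nP: "P \<noteq> UNIV" and pr: "\<And>r m. r *s m \<in> P \<Longrightarrow> r \<in> colon scale P \<or> m \<in> P"
    using assms unfolding prime_submodule_def by auto
  show ?thesis unfolding prime_ring_ideal_def
  proof (intro conjI allI impI)
    show "ring_ideal (colon scale P)" by (rule colon_ideal[OF sP])
    show "colon scale P \<noteq> UNIV"
    proof
      assume "colon scale P = UNIV"
      then have "\<forall>m. 1 *s m \<in> P" unfolding colon_def by blast
      then show False using nP by auto
    qed
  next
    fix a b assume ab: "a * b \<in> colon scale P"
    show "a \<in> colon scale P \<or> b \<in> colon scale P"
    proof (cases "a \<in> colon scale P")
      case True then show ?thesis by blast
    next
      case False
      note na = False
      have "b *s m \<in> P" for m
      proof -
        have "a *s (b *s m) \<in> P" using ab unfolding colon_def by simp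
        then show ?thesis using pr na by blast
      qed
      then have "b \<in> colon scale P" unfolding colon_def by blast
      then show ?thesis by blast
    qed
  qed
qed

end

lemma span_fin: assumes "x \<in> rmod.span S" shows "\<exists>T. finite T \<and> T \<subseteq> S \<and> x \<in> rmod.span T"
proof -
  obtain t r where x: "x = (\<Sum>a\<in>t. r a * a)" "finite t" "t \<subseteq> S"
    using assms unfolding rmod.span_explicit by blast
  have "x \<in> rmod.span t" unfolding x(1)
    by (rule rmod.span_sum, rule rmod.span_scale, rule rmod.span_base)
  then show ?thesis using x by blast
qed

lemma memS: "v = (\<Sum>g\<in>G. c g * HH g) \<Longrightarrow> v \<in> {(\<Sum>g\<in>G. c g * HH g) | c. True}"
  by blast

lemma span_image_sum:
  fixes HH :: "'b \<Rightarrow> 'a::comm_ring_1"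
  assumes G: "finite G"
  shows "rmod.span (HH ` G) \<subseteq> {(\<Sum>g\<in>G. c g * HH g) | c. True}"
proof (rule rmod.span_minimal)
  show "HH ` G \<subseteq> {(\<Sum>g\<in>G. c g * HH g) | c. True}"
  proof
    fix v assume "v \<in> HH ` G"
    then obtain g0 where g0: "g0 \<in> G" "v = HH g0" by blast
    have "(\<Sum>g\<in>G. (if g = g0 then 1 else 0) * HH g) = (\<Sum>g\<in>G. if g = g0 then HH g else 0)"
      by (rule sum.cong) auto
    also have "\<dots> = HH g0" using G g0(1) by (simp add: sum.delta)
    finally have "v = (\<Sum>g\<in>G. (\<lambda>g. if g = g0 then 1 else 0) g * HH g)" using g0(2) by simp
    then show "v \<in> {(\<Sum>g\<in>G. c g * HH g) | c. True}" by (rule memS)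
  qed
  show "rmod.subspace {(\<Sum>g\<in>G. c g * HH g) | c. True}"
    unfolding rmod.subspace_def
  proof (intro conjI ballI allI)
    have "(0::'a) = (\<Sum>g\<in>G. 0 * HH g)" by simp
    then show "0 \<in> {(\<Sum>g\<in>G. c g * HH g) | c. True}" by (rule memS)
  next
    fix x y assume "x \<in> {(\<Sum>g\<in>G. c g * HH g) | c. True}" "y \<in> {(\<Sum>g\<in>G. c g * HH g) | c. True}"
    then obtain c d where "x = (\<Sum>g\<in>G. c g * HH g)" "y = (\<Sum>g\<in>G. d g * HH g)" by blast
    then have "x + y = (\<Sum>g\<in>G. (c g + d g) * HH g)" by (simp add: sum.distrib distrib_right)
    then show "x + y \<in> {(\<Sum>g\<in>G. c g * HH g) | c. True}" by (rule memS)
  next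
    fix r x assume "x \<in> {(\<Sum>g\<in>G. c g * HH g) | c. True}"
    then obtain c where "x = (\<Sum>g\<in>G. c g * HH g)" by blast
    then have "r * x = (\<Sum>g\<in>G. (r * c g) * HH g)" by (simp add: sum_distrib_left mult.assoc)
    then show "r * x \<in> {(\<Sum>g\<in>G. c g * HH g) | c. True}" by (rule memS)
  qed
qed

context module
begin

lemma vanish:
  assumes H: "\<forall>q. prime_ring_ideal q \<longrightarrow> f \<notin> q \<longrightarrow> (\<exists>u. u \<notin> q \<and> u *s z = 0)"
  shows "\<exists>b. f^b *s z = 0"
proof (rule ccontr)
  assume na: "\<not> ?thesis"
  define A where "A = {r. r *s z = 0}"
  have Aid: "ring_ideal A" unfolding ring_ideal_def A_def
    by (auto simp: scale_left_distrib simp flip: scale_scale)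
  have "\<forall>n. f^n \<notin> A" using na unfolding A_def by blast
  then obtain q where q: "prime_ring_ideal q" "A \<subseteq> q" "f \<notin> q" using exists_prime[OF Aid] by blast
  then obtain u where "u \<notin> q" "u *s z = 0" using H by blast
  then show False using q(2) unfolding A_def by blast
qed

end

theorem proposition3p11:
  fixes scM :: "'r::comm_ring_1 \<Rightarrow> 'm::ab_group_add \<Rightarrow> 'm"
    and scN :: "'r \<Rightarrow> 'n::ab_group_add \<Rightarrow> 'n"
    and K :: "'m set"
  assumes "noetherian_ring TYPE('r)"
    and "module scM" and "module scN"
    and "faithful_mod scM" and "primeful scM"
    and "Spec_mod scM \<noteq> {}"
    and "module.subspace scM K"
  shows "coker_eps_torsion scN scM (Spec_mod scM - Vset scM K) (colon scM K)"
proof -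
  interpret M: module scM by fact
  interpret N: module scN by fact
  define U where "U = Spec_mod scM - Vset scM K"
  define I where "I = colon scM K"
  have Iid: "ring_ideal I" unfolding I_def by (rule M.colon_ideal) fact
  have colp: "P \<in> Spec_mod scM \<Longrightarrow> prime_ring_ideal (colon scM P)" for P
    unfolding Spec_mod_def by (auto intro: M.colon_prime)
  have Uiff: "P \<in> U \<longleftrightarrow> P \<in> Spec_mod scM \<and> \<not> I \<subseteq> colon scM P" for P
    unfolding U_def Vset_def I_def by auto
  have realize: "\<exists>P\<in>Spec_mod scM. colon scM P = q" if q: "prime_ring_ideal q" for q
  proof -
    have nz: "(UNIV :: 'm set) \<noteq> {0}"
    proof
      assume u: "(UNIV :: 'm set) = {0}"
      obtain P where "P \<in> Spec_mod scM" using assms(6) by blast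
      then have "M.subspace P" "P \<noteq> UNIV" unfolding Spec_mod_def prime_submodule_def by auto
      then have "0 \<in> P" by (simp add: M.subspace_0)
      have x0: "x = 0" for x :: 'm
      proof -
        have "x \<in> (UNIV::'m set)" by simp
        then show ?thesis unfolding u by simp
      qed
      have "P = UNIV"
      proof
        show "UNIV \<subseteq> P" using \<open>0 \<in> P\<close> x0 by (metis subsetI)
      qed simp
      then show False using \<open>P \<noteq> UNIV\<close> by blast
    qed
    have "ann scM \<subseteq> q" using assms(4) ideal_0[OF prime_ideal[OF q]] unfolding faithful_mod_def by simp
    then show ?thesis using assms(5) q nz unfolding primeful_def by blast
  qed
  show ?thesis unfolding coker_eps_torsion_def U_def[symmetric] I_def[symmetric]
  proof
    fix \<gamma> assume \<gamma>A: "\<gamma> \<in> A_sections scN scM U"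
    have \<gamma>loc: "\<forall>Q\<in>U. \<exists>W. zariski_open scM W \<and> Q \<in> W \<and> W \<subseteq> U \<and>
        (\<exists>s m. \<forall>P\<in>W. s \<notin> colon scM P \<and> \<gamma> (colon scM P) = loc_frac scN (colon scM P) m s)"
      using \<gamma>A unfolding A_sections_def by blast
    have "\<forall>Q\<in>U. \<exists>L. \<exists>s m. M.subspace L \<and> Q \<notin> Vset scM L \<and> (\<forall>P\<in>Spec_mod scM. P \<notin> Vset scM L \<longrightarrow>
        P \<in> U \<and> s \<notin> colon scM P \<and> \<gamma> (colon scM P) = loc_frac scN (colon scM P) m s)"
    proof
      fix Q assume "Q \<in> U"
      then obtain W s m where W: "zariski_open scM W" "Q \<in> W" "W \<subseteq> U"
        "\<forall>P\<in>W. s \<notin> colon scM P \<and> \<gamma> (colon scM P) = loc_frac scN (colon scM P) m s"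
        using \<gamma>loc by blast
      then obtain L where L: "M.subspace L" "W = Spec_mod scM - Vset scM L"
        unfolding zariski_open_def by blast
      show "\<exists>L. \<exists>s m. M.subspace L \<and> Q \<notin> Vset scM L \<and> (\<forall>P\<in>Spec_mod scM. P \<notin> Vset scM L \<longrightarrow>
        P \<in> U \<and> s \<notin> colon scM P \<and> \<gamma> (colon scM P) = loc_frac scN (colon scM P) m s)"
        using W L by blast
    qed
    note pre = this
    obtain Lf where H1: "\<forall>Q\<in>U. \<exists>s m. M.subspace (Lf Q) \<and> Q \<notin> Vset scM (Lf Q) \<and> (\<forall>P\<in>Spec_mod scM. P \<notin> Vset scM (Lf Q) \<longrightarrow>
        P \<in> U \<and> s \<notin> colon scM P \<and> \<gamma> (colon scM P) = loc_frac scN (colon scM P) m s)"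
      using bchoice[OF pre] by blast
    then obtain sf where H2: "\<forall>Q\<in>U. \<exists>m. M.subspace (Lf Q) \<and> Q \<notin> Vset scM (Lf Q) \<and> (\<forall>P\<in>Spec_mod scM. P \<notin> Vset scM (Lf Q) \<longrightarrow>
        P \<in> U \<and> sf Q \<notin> colon scM P \<and> \<gamma> (colon scM P) = loc_frac scN (colon scM P) m (sf Q))"
      using bchoice[OF H1] by blast
    then obtain mf where LF: "\<forall>Q\<in>U. M.subspace (Lf Q) \<and> Q \<notin> Vset scM (Lf Q) \<and> (\<forall>P\<in>Spec_mod scM. P \<notin> Vset scM (Lf Q) \<longrightarrow>
        P \<in> U \<and> sf Q \<notin> colon scM P \<and> \<gamma> (colon scM P) = loc_frac scN (colon scM P) (mf Q) (sf Q))"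
      using bchoice[OF H2] by blast
    define Jf where "Jf Q = colon scM (Lf Q)" for Q
    have Jid: "Q \<in> U \<Longrightarrow> ring_ideal (Jf Q)" for Q unfolding Jf_def using LF M.colon_ideal by blast
    have Dprop: "(\<exists>P\<in>U. colon scM P = q) \<and> sf Q \<notin> q \<and> \<gamma> q = loc_frac scN q (mf Q) (sf Q)"
      if Q: "Q \<in> U" and q: "prime_ring_ideal q" and nJ: "\<not> Jf Q \<subseteq> q" for Q q
    proof -
      obtain P where P: "P \<in> Spec_mod scM" "colon scM P = q" using realize[OF q] by blast
      have "P \<notin> Vset scM (Lf Q)" using nJ P unfolding Vset_def Jf_def by blast
      then show ?thesis using LF Q P by blast
    qed
    define I' where "I' = rmod.span (\<Union>Q\<in>U. Jf Q)"
    have I'id: "ring_ideal I'" unfolding I'_def ring_ideal_iff by simp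
    have step1: "I \<subseteq> rad I'"
    proof
      fix f assume f: "f \<in> I"
      show "f \<in> rad I'"
      proof (rule ccontr)
        assume "f \<notin> rad I'"
        then have "\<forall>n. f^n \<notin> I'" unfolding rad_def by blast
        then obtain q where q: "prime_ring_ideal q" "I' \<subseteq> q" "f \<notin> q" using exists_prime[OF I'id] by blast
        then obtain P where P: "P \<in> Spec_mod scM" "colon scM P = q" using realize by blast
        have PU: "P \<in> U" using Uiff P q f by blast
        then have "P \<notin> Vset scM (Lf P)" using LF by blast
        then have "\<not> Jf P \<subseteq> q" using P unfolding Vset_def Jf_def by blast
        moreover have "Jf P \<subseteq> q" using q(2) PU rmod.span_superset unfolding I'_def by blast
        ultimately show False by blast
      qed
    qed
    obtain F0 where F0: "finite F0" "F0 \<subseteq> I" "I = rmod.span F0" using noeth_fg[OF assms(1) Iid] by blast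
    have "\<forall>f\<in>F0. \<exists>T. finite T \<and> T \<subseteq> (\<Union>Q\<in>U. Jf Q) \<and> f \<in> rad (rmod.span T)"
    proof
      fix f assume "f \<in> F0"
      then have "f \<in> rad I'" using F0 step1 by blast
      then obtain e where "f^e \<in> I'" unfolding rad_def by blast
      then obtain T where "finite T" "T \<subseteq> (\<Union>Q\<in>U. Jf Q)" "f^e \<in> rmod.span T"
        unfolding I'_def using span_fin by blast
      then show "\<exists>T. finite T \<and> T \<subseteq> (\<Union>Q\<in>U. Jf Q) \<and> f \<in> rad (rmod.span T)" unfolding rad_def by blast
    qed
    note pre = this
    obtain Tf where Tf: "\<forall>f\<in>F0. finite (Tf f) \<and> Tf f \<subseteq> (\<Union>Q\<in>U. Jf Q) \<and> f \<in> rad (rmod.span (Tf f))"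
      using bchoice[OF pre] by blast
    define G where "G = (\<Union>f\<in>F0. Tf f)"
    have Gfin: "finite G" using F0(1) Tf unfolding G_def by blast
    have GJ: "G \<subseteq> (\<Union>Q\<in>U. Jf Q)" using Tf unfolding G_def by blast
    have F0G: "F0 \<subseteq> rad (rmod.span G)"
    proof
      fix f assume "f \<in> F0"
      then have "f \<in> rad (rmod.span (Tf f))" "Tf f \<subseteq> G" using Tf unfolding G_def by auto
      then show "f \<in> rad (rmod.span G)" using rad_mono[OF rmod.span_mono] by blast
    qed
    have "\<forall>g\<in>G. \<exists>Q. Q \<in> U \<and> g \<in> Jf Q" using GJ by blast
    note pre = this
    obtain Qg where Qg: "\<forall>g\<in>G. Qg g \<in> U \<and> g \<in> Jf (Qg g)" using bchoice[OF pre] by blast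
    have "\<forall>g\<in>G. \<exists>a d. g^a = d * sf (Qg g)"
    proof
      fix g assume g: "g \<in> G"
      let ?s = "sf (Qg g)"
      have sid: "ring_ideal (rmod.span {?s})" unfolding ring_ideal_iff by simp
      show "\<exists>a d. g^a = d * ?s"
      proof (rule ccontr)
        assume na: "\<not> (\<exists>a d. g^a = d * ?s)"
        have "\<forall>n. g^n \<notin> rmod.span {?s}" using na unfolding rmod.span_singleton by auto
        then obtain q where q: "prime_ring_ideal q" "rmod.span {?s} \<subseteq> q" "g \<notin> q"
          using exists_prime[OF sid] by blast
        have "\<not> Jf (Qg g) \<subseteq> q" using Qg g q(3) by blast
        then have "?s \<notin> q" using Dprop Qg g q(1) by blast
        moreover have "?s \<in> q" using q(2) rmod.span_base[of ?s "{?s}"] by blast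
        ultimately show False by blast
      qed
    qed
    note pre = this
    obtain aa where "\<forall>g\<in>G. \<exists>d. g^(aa g) = d * sf (Qg g)" using bchoice[OF pre] by blast
    note pre = this
    obtain dd where ad: "\<forall>g\<in>G. g^(aa g) = dd g * sf (Qg g)" using bchoice[OF pre] by blast
    define h where "h g = g^(Suc (aa g))" for g
    define d where "d g = g * dd g" for g
    define s where "s g = sf (Qg g)" for g
    define m where "m g = mf (Qg g)" for g
    have hds: "h g = d g * s g" if "g \<in> G" for g
      using ad that unfolding h_def d_def s_def by (simp add: mult.assoc)
    have hJ: "h g \<in> Jf (Qg g)" if g: "g \<in> G" for g
    proof -
      have "g * g^(aa g) \<in> Jf (Qg g)" using ideal_mult2[OF Jid] Qg g by blast
      then show ?thesis unfolding h_def by simp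
    qed
    have hprop: "(\<exists>P\<in>U. colon scM P = q) \<and> s g \<notin> q \<and> \<gamma> q = loc_frac scN q (m g) (s g)"
      if g: "g \<in> G" and q: "prime_ring_ideal q" and hq: "h g \<notin> q" for g q
    proof -
      have "\<not> Jf (Qg g) \<subseteq> q" using hJ[OF g] hq by blast
      then show ?thesis using Dprop[OF _ q] Qg g unfolding s_def m_def by blast
    qed
    have "\<forall>x\<in>G \<times> G. \<exists>b. scN ((h (fst x) * h (snd x))^b) (scN (s (snd x)) (m (fst x)) - scN (s (fst x)) (m (snd x))) = 0"
    proof
      fix x assume x: "x \<in> G \<times> G"
      define g1 where "g1 = fst x"
      define g2 where "g2 = snd x"
      have g: "g1 \<in> G" "g2 \<in> G" using x unfolding g1_def g2_def by auto
      have "\<exists>b. scN ((h g1 * h g2)^b) (scN (s g2) (m g1) - scN (s g1) (m g2)) = 0"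
      proof (rule N.vanish, intro allI impI)
        fix q assume q: "prime_ring_ideal q" "h g1 * h g2 \<notin> q"
        have "h g1 \<notin> q"
        proof
          assume "h g1 \<in> q" then have "h g1 * h g2 \<in> q" by (rule ideal_mult2[OF prime_ideal[OF q(1)]])
          then show False using q(2) by blast
        qed
        moreover have "h g2 \<notin> q"
        proof
          assume "h g2 \<in> q" then have "h g1 * h g2 \<in> q" by (rule ideal_mult[OF prime_ideal[OF q(1)]])
          then show False using q(2) by blast
        qed
        ultimately have e1: "\<gamma> q = loc_frac scN q (m g1) (s g1)" and e2: "\<gamma> q = loc_frac scN q (m g2) (s g2)"
          and s2: "s g2 \<notin> q"
          using hprop g q(1) by blast+
        have "(m g2, s g2) \<in> loc_frac scN q (m g2) (s g2)" by (rule N.loc_refl[OF s2])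
        then have "(m g2, s g2) \<in> loc_frac scN q (m g1) (s g1)" using e1 e2 by simp
        then show "\<exists>u. u \<notin> q \<and> scN u (scN (s g2) (m g1) - scN (s g1) (m g2)) = 0"
          using N.loc_mem by blast
      qed
      then show "\<exists>b. scN ((h (fst x) * h (snd x))^b) (scN (s (snd x)) (m (fst x)) - scN (s (fst x)) (m (snd x))) = 0"
        unfolding g1_def g2_def .
    qed
    note pre = this
    obtain bf where bf: "\<forall>x\<in>G \<times> G. scN ((h (fst x) * h (snd x))^(bf x)) (scN (s (snd x)) (m (fst x)) - scN (s (fst x)) (m (snd x))) = 0"
      using bchoice[OF pre] by blast
    define B where "B = Max (insert 0 (bf ` (G \<times> G)))"
    have comp: "scN ((h g1 * h g2)^B) (scN (s g2) (m g1) - scN (s g1) (m g2)) = 0"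
      if g: "g1 \<in> G" "g2 \<in> G" for g1 g2
    proof -
      have x: "(g1, g2) \<in> G \<times> G" using g by blast
      have le: "bf (g1, g2) \<le> B" unfolding B_def using Gfin x by (intro Max_ge) auto
      have "(h g1 * h g2)^B = (h g1 * h g2)^(B - bf (g1, g2)) * (h g1 * h g2)^(bf (g1, g2))"
        using le by (simp add: power_add[symmetric])
      then show ?thesis using bf x by (simp flip: N.scale_scale)
    qed
    define HH where "HH g = h g ^ Suc B" for g
    define y where "y g = scN (h g ^ B * d g) (m g)" for g
    have I1: "scN (HH g1) (y g2) = scN (HH g2) (y g1)" if g: "g1 \<in> G" "g2 \<in> G" for g1 g2
    proof -
      define k where "k = d g1 * d g2"
      have c0: "scN k (scN ((h g1 * h g2)^B) (scN (s g2) (m g1) - scN (s g1) (m g2))) = 0"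
        using comp[OF g] by simp
      have r1: "HH g2 * (h g1 ^ B * d g1) = (k * (h g1 * h g2)^B) * s g2"
        unfolding HH_def k_def power_Suc hds[OF g(2)] power_mult_distrib by (simp only: ac_simps)
      have r2: "HH g1 * (h g2 ^ B * d g2) = (k * (h g1 * h g2)^B) * s g1"
        unfolding HH_def k_def power_Suc hds[OF g(1)] power_mult_distrib by (simp only: ac_simps)
      have "scN (HH g2) (y g1) = scN (k * (h g1 * h g2)^B) (scN (s g2) (m g1))"
        unfolding y_def N.scale_scale r1 by (simp only: mult.assoc)
      moreover have "scN (HH g1) (y g2) = scN (k * (h g1 * h g2)^B) (scN (s g1) (m g2))"
        unfolding y_def N.scale_scale r2 by (simp only: mult.assoc)
      moreover have "scN (k * (h g1 * h g2)^B) (scN (s g2) (m g1)) = scN (k * (h g1 * h g2)^B) (scN (s g1) (m g2))"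
        using c0 unfolding N.scale_scale N.eqd .
      ultimately show ?thesis by simp
    qed
    have I2: "scN (s g) (y g) = scN (HH g) (m g)" if g: "g \<in> G" for g
    proof -
      have "s g * (h g ^ B * d g) = HH g" unfolding HH_def power_Suc hds[OF g] by (simp only: ac_simps)
      then show ?thesis unfolding y_def N.scale_scale by simp
    qed
    define SH where "SH = rmod.span (HH ` G)"
    have SHid: "ring_ideal SH" unfolding SH_def ring_ideal_iff by simp
    have hG: "h ` G \<subseteq> rad SH"
    proof
      fix v assume "v \<in> h ` G"
      then obtain g where g: "g \<in> G" "v = h g" by blast
      have "v ^ Suc B \<in> SH" unfolding SH_def g(2) HH_def[symmetric] using g(1) by (intro rmod.span_base) blast
      then show "v \<in> rad SH" unfolding rad_def by blast
    qed
    have Gh: "G \<subseteq> rad (rmod.span (h ` G))"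
    proof
      fix g assume g: "g \<in> G"
      have "g ^ Suc (aa g) \<in> rmod.span (h ` G)" unfolding h_def[symmetric] using g by (intro rmod.span_base) blast
      then show "g \<in> rad (rmod.span (h ` G))" unfolding rad_def by blast
    qed
    have radh: "rad (rmod.span (h ` G)) \<subseteq> rad SH"
      using rad_mono[OF span_rad[OF SHid hG]] rad_rad by blast
    have F0h: "F0 \<subseteq> rad (rmod.span (h ` G))"
    proof -
      have hid: "ring_ideal (rmod.span (h ` G))" unfolding ring_ideal_iff by simp
      have "rad (rmod.span G) \<subseteq> rad (rmod.span (h ` G))"
        using rad_mono[OF span_rad[OF hid Gh]] rad_rad by blast
      then show ?thesis using F0G by blast
    qed
    have "F0 \<subseteq> rad SH" using F0h radh by blast
    then obtain kk where kk: "ideal_pow I kk \<subseteq> SH" using ideal_pow_sub[OF SHid F0(1)] F0(3) by blast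
    show "\<exists>k. \<forall>r\<in>ideal_pow I k. sect_smul scN scM U r \<gamma> \<in> range (eps_map scN scM U)"
    proof (intro exI[of _ kk] ballI)
      fix r assume "r \<in> ideal_pow I kk"
      then have "r \<in> SH" using kk by blast
      then obtain c where rc: "r = (\<Sum>g\<in>G. c g * HH g)" using span_image_sum[OF Gfin, of HH] unfolding SH_def by blast
      define n where "n = (\<Sum>g\<in>G. scN (c g) (y g))"
      have key: "scN (HH g0) n = scN r (y g0)" if g0: "g0 \<in> G" for g0
      proof -
        have "scN (HH g0) n = (\<Sum>g\<in>G. scN (HH g0) (scN (c g) (y g)))" unfolding n_def by (rule N.scale_sum_right)
        also have "\<dots> = (\<Sum>g\<in>G. scN (c g) (scN (HH g) (y g0)))"
        proof (rule sum.cong)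
          fix g assume g: "g \<in> G"
          show "scN (HH g0) (scN (c g) (y g)) = scN (c g) (scN (HH g) (y g0))"
            by (subst N.scale_left_commute) (simp only: I1[OF g0 g])
        qed simp
        also have "\<dots> = (\<Sum>g\<in>G. scN (c g * HH g) (y g0))" by (simp add: N.scale_scale)
        also have "\<dots> = scN r (y g0)" unfolding rc by (rule N.scale_sum_left[symmetric])
        finally show ?thesis .
      qed
      have "sect_smul scN scM U r \<gamma> = eps_map scN scM U n"
      proof
        fix p
        show "sect_smul scN scM U r \<gamma> p = eps_map scN scM U n p"
        proof (cases "p \<in> Supp_open scM U")
          case False then show ?thesis unfolding sect_smul_def eps_map_def by simp
        next
          case True
          then obtain P where P: "P \<in> U" "p = colon scM P" unfolding Supp_open_def by blast
          have pp: "prime_ring_ideal p" using P colp Uiff by blast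
          have "\<exists>g\<in>G. h g \<notin> p"
          proof (rule ccontr)
            assume "\<not> (\<exists>g\<in>G. h g \<notin> p)"
            then have "h ` G \<subseteq> p" by blast
            then have "rmod.span (h ` G) \<subseteq> p"
              using rmod.span_minimal prime_ideal[OF pp] ring_ideal_iff by blast
            then have "rad (rmod.span (h ` G)) \<subseteq> p" by (rule prime_rad[OF pp])
            then have "F0 \<subseteq> p" using F0h by blast
            then have "I \<subseteq> p" unfolding F0(3)
              using rmod.span_minimal prime_ideal[OF pp] ring_ideal_iff by blast
            then show False using Uiff P by blast
          qed
          then obtain g where g: "g \<in> G" "h g \<notin> p" by blast
          have hp: "\<gamma> p = loc_frac scN p (m g) (s g)" "s g \<notin> p" using hprop[OF g(1) pp g(2)] by blast+
          have "(m g, s g) \<in> \<gamma> p" using hp N.loc_refl by simp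
          then have xin: "(SOME x. x \<in> \<gamma> p) \<in> \<gamma> p" by (rule someI)
          obtain m' s' where x: "(SOME x. x \<in> \<gamma> p) = (m', s')" by (cases "SOME x. x \<in> \<gamma> p") blast
          from xin x hp have "(m', s') \<in> loc_frac scN p (m g) (s g)" by simp
          from N.loc_mem[OF this] obtain u where s': "s' \<notin> p" and u: "u \<notin> p" "scN u (scN s' (m g) - scN (s g) m') = 0"
            by blast
          have lhs: "sect_smul scN scM U r \<gamma> p = loc_frac scN p (scN r m') s'"
            unfolding sect_smul_def loc_smul_def using True x by simp
          have rhs: "eps_map scN scM U n p = loc_frac scN p n 1" unfolding eps_map_def using True by simp
          define w where "w = u * s g * HH g"
          have w: "w \<notin> p" unfolding w_def HH_def
            using u(1) hp(2) prime_pow_notin[OF pp g(2)] by (intro prime_mult_notin[OF pp]) blast+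
          have u1: "scN (u * s') (m g) = scN (u * s g) m'" using u(2) unfolding N.eqd N.scale_scale .
          have "scN w (scN s' n) = scN (u * s g * s') (scN (HH g) n)"
            unfolding w_def N.scale_scale by (simp only: ac_simps)
          also have "\<dots> = scN (u * s g * s') (scN r (y g))" by (simp only: key[OF g(1)])
          also have "\<dots> = scN (u * s' * r) (scN (s g) (y g))" unfolding N.scale_scale by (simp only: ac_simps)
          also have "\<dots> = scN (u * s' * r) (scN (HH g) (m g))" by (simp only: I2[OF g(1)])
          also have "\<dots> = scN (r * HH g) (scN (u * s') (m g))" unfolding N.scale_scale by (simp only: ac_simps)
          also have "\<dots> = scN (r * HH g) (scN (u * s g) m')" by (simp only: u1)
          also have "\<dots> = scN w (scN r m')" unfolding w_def N.scale_scale by (simp only: ac_simps)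
          finally have "scN w (scN 1 (scN r m') - scN s' n) = 0" unfolding N.eqd by simp
          then have "loc_frac scN p (scN r m') s' = loc_frac scN p n 1"
            by (rule N.loc_eq[OF pp s' prime_one_notin[OF pp] w])
          then show ?thesis using lhs rhs by simp
        qed
      qed
      then show "sect_smul scN scM U r \<gamma> \<in> range (eps_map scN scM U)" by blast
    qed
  qed
qed

end
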